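(* Assume Assumption (S). For Runge–Kutta coefficients $d_{\ell\kappa}$ and source functions $g^{n,\kappa}\in L^2(\Omega)$, let $G^{n,\ell,*}\in\mathbb V^k$ be defined by $(G^{n,\ell,*},\omega)_*=\sum_{0\le\kappa\le\ell}d_{\ell\kappa}(g^{n,\kappa},M^*\omega)$ for all $\omega\in\mathbb V^k$. Then there is a constant $C>0$ independent of $n$ (and of the mesh) such that $$\|G^{n,\ell,*}\|_*^2\le C\sum_{\kappa=0}^\ell\|g^{n,\kappa}\|^2,\qquad0\le\ell\le s-1.$$
   Context: Let $\Omega=[a,b]$ be partitioned into finitely many cells $I_i=[x_{i-\frac12},x_{i+\frac12}]$ with sizes $h_i$, $h=\max_ih_i$, quasi-uniform ($h\le Ch_i$, fixed $C$). $(\cdot,\cdot)$, $\|\cdot\|$: $L^2(\Omega)$ inner product and norm; $(\cdot,\cdot)_{I_i}$: $L^2(I_i)$ inner product. $\mathbb V^k=\{v\in L^2(\Omega): v|_{I_i}\in\mathbb P^k(I_i)\ \forall i\}$. Each $I_i$ has subdivision points $x_{i-\frac12}=x_{i,0}<x_{i,1}<\dots<x_{i,k}<x_{i,k+1}=x_{i+\frac12}$, control volumes $I_{i,j}=[x_{i,j},x_{i,j+1}]$; $\mathbb V^{k,*}$ = functions constant on each $I_{i,j}$. Quadrature on $I_i$: $Q_i^k(v)=\sum_{j=0}^{k+1}A_{i,j}v(x_{i,j})$, error $R_i^k(v)=\int_{I_i}v\,dx-Q_i^k(v)$, exact on $\mathbb P^{k-1}(I_i)$. $M^*:\mathbb V^k\to\mathbb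 V^{k,*}$: for $v=\omega|_{I_i}$, $(M^*\omega)|_{I_{i,0}}=v(x_{i-\frac12})+A_{i,0}v'(x_{i-\frac12})$, $(M^*\omega)|_{I_{i,j}}-(M^*\omega)|_{I_{i,j-1}}=A_{i,j}v'(x_{i,j})$, $j=1,\dots,k$ (one-sided values from inside $I_i$). $L_{i,\ell}$: shifted Legendre polynomial of degree $\ell$ on $I_i$, $L_{i,\ell}(x_{i+\frac12})=1$, $(L_{i,\ell},L_{i,m})_{I_i}=\delta_{\ell m}h_i/(2\ell+1)$. Assumption (S): $k\ge1$ and for every $i$, $R_i^k$ vanishes on $\mathbb P^{2k-1}(I_i)$ and $\frac{h_i}{2k-1}-Q_i^k(L_{i,k+1}L_{i,k-1})>0$; then $(v,\omega)_*:=(v,M^*\omega)$ is an inner product on $\mathbb V^k$, $\|v\|_*=\sqrt{(v,v)_*}$. The $d_{\ell\kappa}$ ($0\le\kappa\le\ell\le s-1$) are fixed coefficients of an explicit $s$-stage Runge–Kutta method. *)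

theory Defs
  imports "HOL-Analysis.Analysis" "HOL-Computational_Algebra.Polynomial"
begin

text \<open>Mesh on Omega = [xs 0, xs N]: cells I_i = [xs i, xs (Suc i)], i < N.\<close>
definition mesh :: "nat \<Rightarrow> (nat \<Rightarrow> real) \<Rightarrow> bool" where
  "mesh N xs \<longleftrightarrow> N \<ge> 1 \<and> (\<forall>i<N. xs i < xs (Suc i))"

definition cell_size :: "(nat \<Rightarrow> real) \<Rightarrow> nat \<Rightarrow> real" where
  "cell_size xs i = xs (Suc i) - xs i"

definition max_size :: "nat \<Rightarrow> (nat \<Rightarrow> real) \<Rightarrow> real" where
  "max_size N xs = Max (cell_size xs ` {..<N})"

definition quasi_uniform :: "real \<Rightarrow> nat \<Rightarrow> (nat \<Rightarrow> real) \<Rightarrow> bool" where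
  "quasi_uniform Cq N xs \<longleftrightarrow> (\<forall>i<N. max_size N xs \<le> Cq * cell_size xs i)"

text \<open>Shifted Legendre polynomial of degree l on the reference cell [0,1] (Rodrigues formula),
  normalised so that its value at 1 is 1.\<close>
definition ref_legendre :: "nat \<Rightarrow> real poly" where
  "ref_legendre l = smult (1 / fact l) ((pderiv ^^ l) ([:0, -1, 1:] ^ l))"

definition ref_quad :: "nat \<Rightarrow> (nat \<Rightarrow> real) \<Rightarrow> (nat \<Rightarrow> real) \<Rightarrow> real poly \<Rightarrow> real" where
  "ref_quad k \<xi> \<omega> p = (\<Sum>j\<le>Suc k. \<omega> j * poly p (\<xi> j))"

text \<open>Assumption (S), on the reference cell [0,1] (h = 1).\<close>
definition assumption_S :: "nat \<Rightarrow> (nat \<Rightarrow> real) \<Rightarrow> (nat \<Rightarrow> real) \<Rightarrow> bool" where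
  "assumption_S k \<xi> \<omega> \<longleftrightarrow>
     k \<ge> 1 \<and> \<xi> 0 = 0 \<and> \<xi> (Suc k) = 1 \<and> (\<forall>j\<le>k. \<xi> j < \<xi> (Suc j)) \<and>
     (\<forall>p. degree p \<le> 2 * k - 1 \<longrightarrow> integral {0..1} (poly p) = ref_quad k \<xi> \<omega> p) \<and>
     1 / (2 * real k - 1) - ref_quad k \<xi> \<omega> (ref_legendre (Suc k) * ref_legendre (k - 1)) > 0"

definition node :: "(nat \<Rightarrow> real) \<Rightarrow> (nat \<Rightarrow> real) \<Rightarrow> nat \<Rightarrow> nat \<Rightarrow> real" where
  "node xs \<xi> i j = xs i + cell_size xs i * \<xi> j"

definition weight :: "(nat \<Rightarrow> real) \<Rightarrow> (nat \<Rightarrow> real) \<Rightarrow> nat \<Rightarrow> nat \<Rightarrow> real" where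
  "weight xs \<omega> i j = cell_size xs i * \<omega> j"

text \<open>Value of M^* w on control volume [X j, X (Suc j)] of a cell with nodes X, weights A,
  where p = w restricted to the cell.\<close>
primrec mstar_coef :: "(nat \<Rightarrow> real) \<Rightarrow> (nat \<Rightarrow> real) \<Rightarrow> real poly \<Rightarrow> nat \<Rightarrow> real" where
  "mstar_coef X A p 0 = poly p (X 0) + A 0 * poly (pderiv p) (X 0)"
| "mstar_coef X A p (Suc j) = mstar_coef X A p j + A (Suc j) * poly (pderiv p) (X (Suc j))"

definition Vk :: "nat \<Rightarrow> nat \<Rightarrow> (nat \<Rightarrow> real poly) \<Rightarrow> bool" where
  "Vk k N W \<longleftrightarrow> (\<forall>i<N. degree (W i) \<le> k)"

text \<open>L^2 pairing (f, M^* W), where f i is the function used on cell i.\<close>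
definition pair_Mstar :: "nat \<Rightarrow> nat \<Rightarrow> (nat \<Rightarrow> real) \<Rightarrow> (nat \<Rightarrow> real) \<Rightarrow> (nat \<Rightarrow> real) \<Rightarrow>
    (nat \<Rightarrow> real \<Rightarrow> real) \<Rightarrow> (nat \<Rightarrow> real poly) \<Rightarrow> real" where
  "pair_Mstar k N xs \<xi> \<omega> f W =
     (\<Sum>i<N. \<Sum>j\<le>k. mstar_coef (node xs \<xi> i) (weight xs \<omega> i) (W i) j *
        (LBINT x:{node xs \<xi> i j..node xs \<xi> i (Suc j)}. f i x))"

definition star_ip :: "nat \<Rightarrow> nat \<Rightarrow> (nat \<Rightarrow> real) \<Rightarrow> (nat \<Rightarrow> real) \<Rightarrow> (nat \<Rightarrow> real) \<Rightarrow>
    (nat \<Rightarrow> real poly) \<Rightarrow> (nat \<Rightarrow> real poly) \<Rightarrow> real" where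
  "star_ip k N xs \<xi> \<omega> V W = pair_Mstar k N xs \<xi> \<omega> (\<lambda>i. poly (V i)) W"

definition L2_on :: "real set \<Rightarrow> (real \<Rightarrow> real) \<Rightarrow> bool" where
  "L2_on S g \<longleftrightarrow> set_borel_measurable lborel S g \<and> set_integrable lborel S (\<lambda>x. (g x)\<^sup>2)"

definition L2_norm_sq :: "real set \<Rightarrow> (real \<Rightarrow> real) \<Rightarrow> real" where
  "L2_norm_sq S g = (LBINT x:S. (g x)\<^sup>2)"

end

theory Submission imports Defs begin


lemma poly_ftc:
  fixes P :: "real poly"
  assumes "a \<le> b"
  shows "integral {a..b} (poly (pderiv P)) = poly P b - poly P a"
proof -
  have "((poly (pderiv P)) has_integral (poly P b - poly P a)) {a..b}"
    by (rule fundamental_theorem_of_calculus[OF assms])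
       (auto intro!: DERIV_subset[OF poly_DERIV] simp: has_real_derivative_iff_has_vector_derivative[symmetric])
  thus ?thesis by (rule integral_unique)
qed

lemma poly_integrable: "(poly (p::real poly)) integrable_on {a..b}"
  by (rule integrable_continuous_interval) (auto intro: continuous_intros)

lemma lbint_poly:
  fixes P :: "real poly"
  assumes "a \<le> b"
  shows "(LBINT x:{a..b}. poly (pderiv P) x) = poly P b - poly P a"
  unfolding set_lebesgue_integral_def
  by (rule integral_FTC_atLeastAtMost[OF assms])
     (auto intro!: DERIV_subset[OF poly_DERIV] continuous_intros simp: has_real_derivative_iff_has_vector_derivative[symmetric])

definition antider :: "real poly \<Rightarrow> real poly" where
  "antider p = (\<Sum>i\<le>degree p. monom (coeff p i / real (Suc i)) (Suc i))"

lemma pderiv_sum': "pderiv (sum f A) = (\<Sum>x\<in>A. pderiv (f x))"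
  by (induction A rule: infinite_finite_induct) (simp_all add: pderiv_add)

lemma pderiv_antider [simp]: "pderiv (antider p) = p"
proof -
  have "pderiv (antider p) = (\<Sum>i\<le>degree p. monom (coeff p i) i)"
    unfolding antider_def pderiv_sum' pderiv_monom
    by (intro sum.cong) (auto simp del: of_nat_Suc)
  thus ?thesis by (simp add: poly_as_sum_of_monoms)
qed

lemma degree_antider: "degree (antider p) \<le> Suc (degree p)"
  unfolding antider_def
  by (rule degree_sum_le) (auto intro: order.trans[OF degree_monom_le])

definition I01 :: "real poly \<Rightarrow> real" where
  "I01 p = integral {0..1} (poly p)"

lemma I01_ftc: "I01 (pderiv P) = poly P 1 - poly P 0"
  unfolding I01_def by (rule poly_ftc) simp

lemma I01_alt: "I01 p = poly (antider p) 1 - poly (antider p) 0"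
  using I01_ftc[of "antider p"] by simp

lemma poly_fun_add: "poly (p + q) = (\<lambda>x. poly p x + poly q x)" by auto
lemma poly_fun_diff: "poly (p - q::real poly) = (\<lambda>x. poly p x - poly q x)" by auto
lemma poly_fun_smult: "poly (smult c p) = (\<lambda>x. c * poly p x)" by auto
lemma poly_fun_minus: "poly (- p::real poly) = (\<lambda>x. - poly p x)" by auto

lemma I01_add: "I01 (p + q) = I01 p + I01 q"
  unfolding I01_def poly_fun_add by (rule integral_add; rule poly_integrable)

lemma I01_diff: "I01 (p - q) = I01 p - I01 q"
  unfolding I01_def poly_fun_diff by (rule integral_diff; rule poly_integrable)

lemma I01_smult: "I01 (smult c p) = c * I01 p"
  unfolding I01_def poly_fun_smult by (rule integral_mult_right)

lemma I01_minus: "I01 (- p) = - I01 p"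
  unfolding I01_def poly_fun_minus by (rule integral_neg)

lemma I01_0 [simp]: "I01 0 = 0"
proof -
  have "poly 0 = (\<lambda>x::real. 0)" by auto
  thus ?thesis unfolding I01_def by simp
qed

lemma I01_sum: "I01 (sum f A) = (\<Sum>x\<in>A. I01 (f x))"
  by (induction A rule: infinite_finite_induct) (simp_all add: I01_add)

lemma I01_ibp: "I01 (p * pderiv q) = poly (p*q) 1 - poly (p*q) 0 - I01 (pderiv p * q)"
  using I01_ftc[of "p*q"] by (simp add: pderiv_mult I01_add algebra_simps)


definition xx :: "real poly" where "xx = [:0, -1, 1:]"
definition lc :: "nat \<Rightarrow> real" where "lc n = fact (2*n) / (fact n)^2"

abbreviation L where "L \<equiv> ref_legendre"

lemma poch_fact: "pochhammer (real (Suc n)) m * fact n = (fact (n+m) :: real)"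
proof (induction m)
  case (Suc m)
  have "pochhammer (real (Suc n)) (Suc m) * fact n = (pochhammer (real (Suc n)) m * fact n) * (real (Suc n) + real m)"
    by (simp add: pochhammer_Suc)
  also have "\<dots> = fact (n + Suc m)" using Suc.IH by (simp add: fact_Suc algebra_simps)
  finally show ?case .
qed simp

lemma degree_xx_pow: "degree (xx ^ n) = 2*n" and coeff_xx_pow: "coeff (xx^n) (2*n) = 1"
proof -
  have d: "degree xx = 2" "lead_coeff xx = 1" by (simp_all add: xx_def)
  hence "xx \<noteq> 0" by auto
  thus "degree (xx ^ n) = 2*n" using d by (simp add: degree_power_eq)
  thus "coeff (xx^n) (2*n) = 1" using lead_coeff_power[of xx n] d by simp
qed

lemma coeff_L: "coeff (L n) n = lc n"
proof -
  have c: "coeff (xx^n) (n+n) = 1" using coeff_xx_pow[of n] by (simp add: mult_2)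
  have f: "fact (2*n) = (fact (n+n)::real)" by (simp add: mult_2)
  have "coeff (L n) n = (1 / fact n) * (pochhammer (real (Suc n)) n * coeff (xx^n) (n+n))"
    by (simp add: ref_legendre_def coeff_higher_pderiv xx_def)
  also have "\<dots> = (pochhammer (real (Suc n)) n * fact n) / (fact n)^2"
    unfolding c by (simp add: power2_eq_square)
  also have "\<dots> = lc n" unfolding poch_fact lc_def f by simp
  finally show ?thesis .
qed

lemma lc_pos: "lc n > 0" by (simp add: lc_def)

lemma degree_L: "degree (L n) = n"
proof -
  have "degree ((pderiv ^^ n) (xx^n)) = n" by (simp add: degree_higher_pderiv degree_xx_pow)
  hence "degree (L n) \<le> n" by (simp add: ref_legendre_def xx_def[symmetric])
  moreover have "coeff (L n) n \<noteq> 0" using coeff_L lc_pos by (metis less_irrefl)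
  ultimately show ?thesis by (meson le_antisym le_degree)
qed

lemma higher_pderiv_zero:
  fixes p :: "real poly"
  assumes "\<forall>i\<ge>j. coeff p i = 0"
  shows "(pderiv ^^ j) p = 0"
  by (rule poly_eqI) (simp add: coeff_higher_pderiv assms)

lemma xx_factor: "j \<le> n \<Longrightarrow> \<exists>H. (pderiv ^^ j) (xx^n) = xx^(n-j) * H"
proof (induction j)
  case 0 then show ?case by (intro exI[of _ 1]) simp
next
  case (Suc j)
  then obtain H where H: "(pderiv ^^ j) (xx^n) = xx^(n-j) * H" by auto
  obtain m where m: "n - j = Suc m" "n - Suc j = m" using Suc.prems by (metis Suc_diff_Suc Suc_le_lessD)
  have "(pderiv ^^ Suc j) (xx^n) = pderiv (xx^Suc m * H)" using H m by simp
  also have "\<dots> = xx^m * (xx * pderiv H + smult (of_nat (Suc m)) (H * pderiv xx))"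
    by (simp add: pderiv_mult pderiv_power_Suc algebra_simps del: power_Suc)
       (simp add: algebra_simps)
  finally show ?case using m by blast
qed

lemma boundary_zero:
  assumes "j < n"
  shows "poly ((pderiv ^^ j) (xx^n)) 0 = 0" "poly ((pderiv ^^ j) (xx^n)) 1 = 0"
proof -
  obtain H where H: "(pderiv ^^ j) (xx^n) = xx^(n-j) * H" using xx_factor assms by fastforce
  have "n - j > 0" using assms by simp
  thus "poly ((pderiv ^^ j) (xx^n)) 0 = 0" "poly ((pderiv ^^ j) (xx^n)) 1 = 0"
    unfolding H by (simp_all add: xx_def)
qed

lemma ibp_iter:
  "j \<le> n \<Longrightarrow> I01 (p * (pderiv ^^ n) (xx^n)) = (-1)^j * I01 ((pderiv ^^ j) p * (pderiv ^^ (n-j)) (xx^n))"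
proof (induction j)
  case 0 then show ?case by simp
next
  case (Suc j)
  define D where "D = (pderiv ^^ (n - Suc j)) (xx^n)"
  have nj: "n - j = Suc (n - Suc j)" using Suc.prems by simp
  have "(pderiv ^^ (n-j)) (xx^n) = pderiv D" unfolding D_def nj by simp
  hence "I01 ((pderiv ^^ j) p * (pderiv ^^ (n-j)) (xx^n)) = - I01 ((pderiv ^^ Suc j) p * D)"
    using boundary_zero[of "n - Suc j" n] Suc.prems
    by (simp add: I01_ibp D_def)
  with Suc show ?case by (simp add: D_def)
qed

lemma L_orth:
  assumes "\<forall>i\<ge>n. coeff p i = 0"
  shows "I01 (p * L n) = 0"
proof -
  have "I01 (p * L n) = (1 / fact n) * I01 (p * (pderiv ^^ n) (xx^n))"
    by (simp add: ref_legendre_def xx_def I01_smult)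
  also have "\<dots> = 0" using ibp_iter[of n n p] higher_pderiv_zero[OF assms] by simp
  finally show ?thesis .
qed

lemma L_orth': "m < n \<Longrightarrow> I01 (L m * L n) = 0"
  by (rule L_orth) (simp add: coeff_eq_0 degree_L)

lemma beta01: "I01 ([:0,1:]^a * [:1,-1:]^b) = fact a * fact b / fact (a+b+1)"
proof (induction b arbitrary: a)
  case 0
  have "[:0,1:]^a = pderiv (smult (1 / real (Suc a)) ([:0,1:]^Suc a))"
    by (simp add: pderiv_smult pderiv_power_Suc del: power_Suc of_nat_Suc) (simp add: pderiv_pCons)
  hence "I01 ([:0,1:]^a) = poly (smult (1 / real (Suc a)) ([:0,1:]^Suc a)) 1 - poly (smult (1 / real (Suc a)) ([:0,1:]^Suc a)) 0"
    by (metis I01_ftc)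
  hence "I01 ([:0,1:]^a) = 1 / real (Suc a)" by (simp del: of_nat_Suc power_Suc)
  thus ?case by (simp add: fact_Suc)
next
  case (Suc b)
  define P where "P = smult (1 / real (Suc a)) ([:0,1:]^Suc a)"
  define Q where "Q = ([:1,-1:]::real poly)^Suc b"
  have P: "pderiv P = [:0,1:]^a"
    unfolding P_def by (simp add: pderiv_smult pderiv_power_Suc del: power_Suc of_nat_Suc) (simp add: pderiv_pCons)
  have Q: "pderiv Q = - smult (real (Suc b)) ([:1,-1:]^b)"
    unfolding Q_def by (simp add: pderiv_power_Suc del: power_Suc of_nat_Suc) (simp add: pderiv_pCons)
  have "I01 ([:0,1:]^a * [:1,-1:]^Suc b) = I01 (Q * pderiv P)" by (simp add: P Q_def mult.commute)
  also have "\<dots> = - I01 (pderiv Q * P)" by (simp add: I01_ibp P_def Q_def)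
  also have "\<dots> = real (Suc b) / real (Suc a) * I01 ([:0,1:]^Suc a * [:1,-1:]^b)"
  proof -
    have "pderiv Q * P = - smult (real (Suc b) * (1 / real (Suc a))) ([:1,-1:]^b * [:0,1:]^Suc a)"
      unfolding Q P_def by (simp only: mult_smult_left mult_smult_right smult_smult mult_minus_left smult_minus_right mult.commute[of "1 / real (Suc a)"])
    thus ?thesis by (simp only: I01_smult I01_minus mult.commute[of "[:1,-1:]^b"]) simp
  qed
  also have "\<dots> = real (Suc b) / real (Suc a) * (fact (Suc a) * fact b / fact (Suc a + b + 1))"
    unfolding Suc.IH[of "Suc a"] ..
  also have "\<dots> = fact a * fact (Suc b) / fact (a + Suc b + 1)"
  proof -
    have e: "Suc a + b + 1 = a + Suc b + 1" by simp
    have fa: "fact (Suc a) = real (Suc a) * fact a" and fb: "fact (Suc b) = real (Suc b) * fact b" by (simp_all del: of_nat_Suc)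
    show ?thesis unfolding e fa fb by (simp del: fact_Suc of_nat_Suc)
  qed
  finally show ?case .
qed

lemma pderiv_monom_n: "(pderiv ^^ n) (monom (1::real) n) = [:fact n:]"
proof (rule poly_eqI)
  fix i show "coeff ((pderiv ^^ n) (monom (1::real) n)) i = coeff [:fact n:] i"
  proof (cases i)
    case 0 thus ?thesis by (simp add: coeff_higher_pderiv) (rule pochhammer_fact[symmetric])
  next
    case (Suc j) thus ?thesis by (simp add: coeff_higher_pderiv coeff_monom)
  qed
qed

lemma xx_beta: "[:0,1:]^n * [:1,-1:]^n = smult ((-1)^n) (xx^n)"
proof -
  have "[:0,1:] * [:1,-1:] = smult (-1) xx" by (simp add: xx_def)
  hence "([:0,1:] * [:1,-1:])^n = smult (-1) xx ^ n" by simp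
  thus ?thesis by (simp only: power_mult_distrib smult_power)
qed

lemma L_norm: "I01 (L n * L n) = 1 / (2 * real n + 1)"
proof -
  define u where "u = L n - smult (lc n) (monom 1 n)"
  have u: "\<forall>i\<ge>n. coeff u i = 0"
    unfolding u_def using coeff_L[of n] degree_L[of n] by (auto simp: coeff_eq_0)
  have "L n = u + smult (lc n) (monom 1 n)" by (simp add: u_def)
  hence "I01 (L n * L n) = I01 (u * L n) + lc n * I01 (monom 1 n * L n)"
    by (metis I01_add I01_smult distrib_right mult_smult_left)
  also have "I01 (u * L n) = 0" by (rule L_orth[OF u])
  also have "I01 (monom 1 n * L n) = (1 / fact n) * I01 (monom 1 n * (pderiv ^^ n) (xx^n))"
    by (simp add: ref_legendre_def xx_def I01_smult)
  also have "I01 (monom 1 n * (pderiv ^^ n) (xx^n)) = (-1)^n * I01 ((pderiv ^^ n) (monom 1 n) * xx^n)"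
    using ibp_iter[of n n] by simp
  also have "I01 ((pderiv ^^ n) (monom 1 n) * xx^n) = fact n * I01 (xx^n)"
  proof -
    have "[:fact n:] * xx^n = smult (fact n) (xx^n)" by simp
    thus ?thesis unfolding pderiv_monom_n by (simp only: I01_smult)
  qed
  also have "I01 (xx^n) = (-1)^n * I01 ([:0,1:]^n * [:1,-1:]^n)"
    unfolding xx_beta I01_smult by (simp add: power_mult_distrib[symmetric])
  also have "I01 ([:0,1:]^n * [:1,-1:]^n) = fact n * fact n / fact (2*n+1)"
    unfolding beta01 by (simp only: mult_2)
  finally have "I01 (L n * L n) = lc n * (fact n * fact n / fact (2*n+1))"
    by (simp add: power_mult_distrib[symmetric])
  also have "\<dots> = fact (2*n) / fact (2*n+1)" unfolding lc_def by (simp add: power2_eq_square)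
  also have "\<dots> = 1 / (2 * real n + 1)" by (simp add: fact_Suc)
  finally show ?thesis .
qed


lemma mstar_closed:
  "mstar_coef X A p j = poly p (X 0) + (\<Sum>m\<le>j. A m * poly (pderiv p) (X m))"
  by (induction j) simp_all

lemma sbp:
  fixes a V :: "nat \<Rightarrow> real"
  shows "(\<Sum>j\<le>K. (c0 + (\<Sum>m\<le>j. a m)) * (V (Suc j) - V j)) =
         (c0 + (\<Sum>m\<le>K. a m)) * V (Suc K) - c0 * V 0 - (\<Sum>j\<le>K. a j * V j)"
  by (induction K) (simp_all add: algebra_simps)

lemma ref_quad_add: "ref_quad k \<xi> \<omega> (p + q) = ref_quad k \<xi> \<omega> p + ref_quad k \<xi> \<omega> q"
  by (simp add: ref_quad_def algebra_simps sum.distrib)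

lemma ref_quad_smult: "ref_quad k \<xi> \<omega> (smult c p) = c * ref_quad k \<xi> \<omega> p"
  by (simp add: ref_quad_def sum_distrib_left algebra_simps)

lemma ref_quad_diff: "ref_quad k \<xi> \<omega> (p - q) = ref_quad k \<xi> \<omega> p - ref_quad k \<xi> \<omega> q"
  by (simp add: ref_quad_def algebra_simps sum_subtractf)

lemma ref_quad_0 [simp]: "ref_quad k \<xi> \<omega> 0 = 0"
  by (simp add: ref_quad_def)

lemma ref_quad_sum: "ref_quad k \<xi> \<omega> (sum f A) = (\<Sum>x\<in>A. ref_quad k \<xi> \<omega> (f x))"
  by (induction A rule: infinite_finite_induct) (simp_all add: ref_quad_add)

definition Rr :: "nat \<Rightarrow> (nat \<Rightarrow> real) \<Rightarrow> (nat \<Rightarrow> real) \<Rightarrow> real poly \<Rightarrow> real" where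
  "Rr k \<xi> \<omega> p = I01 p - ref_quad k \<xi> \<omega> p"

lemma Rr_add: "Rr k \<xi> \<omega> (p + q) = Rr k \<xi> \<omega> p + Rr k \<xi> \<omega> q"
  by (simp add: Rr_def ref_quad_add I01_add)
lemma Rr_diff: "Rr k \<xi> \<omega> (p - q) = Rr k \<xi> \<omega> p - Rr k \<xi> \<omega> q"
  by (simp add: Rr_def ref_quad_diff I01_diff)
lemma Rr_smult: "Rr k \<xi> \<omega> (smult c p) = c * Rr k \<xi> \<omega> p"
  by (simp add: Rr_def ref_quad_smult I01_smult algebra_simps)
lemma Rr_0 [simp]: "Rr k \<xi> \<omega> 0 = 0"
  by (simp add: Rr_def)
lemma Rr_sum: "Rr k \<xi> \<omega> (sum f A) = (\<Sum>x\<in>A. Rr k \<xi> \<omega> (f x))"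
  by (induction A rule: infinite_finite_induct) (simp_all add: Rr_add)

context
  fixes k :: nat and \<xi> \<omega> :: "nat \<Rightarrow> real"
  assumes S: "assumption_S k \<xi> \<omega>"
begin

lemma k_ge1: "k \<ge> 1" using S by (simp add: assumption_S_def)
lemma xi0: "\<xi> 0 = 0" using S by (simp add: assumption_S_def)
lemma xi1: "\<xi> (Suc k) = 1" using S by (simp add: assumption_S_def)
lemma xi_mono: "j \<le> k \<Longrightarrow> \<xi> j < \<xi> (Suc j)" using S by (simp add: assumption_S_def)

lemma Rr_exact: "degree p \<le> 2*k - 1 \<Longrightarrow> Rr k \<xi> \<omega> p = 0"
  using S by (simp add: assumption_S_def Rr_def I01_def)

lemma Rr_top:
  assumes "degree p \<le> 2*k"
  shows "Rr k \<xi> \<omega> p = coeff p (2*k) * Rr k \<xi> \<omega> (monom 1 (2*k))"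
proof -
  have "degree (p - smult (coeff p (2*k)) (monom 1 (2*k))) \<le> 2*k - 1"
  proof (rule degree_le, intro allI impI)
    fix i assume "2*k - 1 < i"
    hence "i \<ge> 2*k" using k_ge1 by linarith
    thus "coeff (p - smult (coeff p (2*k)) (monom 1 (2*k))) i = 0"
      using assms by (cases "i = 2*k") (auto simp: coeff_eq_0 coeff_monom)
  qed
  hence "Rr k \<xi> \<omega> (p - smult (coeff p (2*k)) (monom 1 (2*k))) = 0" by (rule Rr_exact)
  thus ?thesis by (simp add: Rr_diff Rr_smult)
qed

lemma qref_formula:
  assumes dv: "degree v \<le> k" and V: "pderiv V = v"
  shows "(\<Sum>j\<le>k. mstar_coef \<xi> \<omega> v j * (poly V (\<xi> (Suc j)) - poly V (\<xi> j)))
         = I01 (v * v) + Rr k \<xi> \<omega> (pderiv v * V)"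
proof -
  define a where "a m = \<omega> m * poly (pderiv v) (\<xi> m)" for m
  have "(\<Sum>j\<le>k. mstar_coef \<xi> \<omega> v j * (poly V (\<xi> (Suc j)) - poly V (\<xi> j)))
        = (\<Sum>j\<le>k. (poly v 0 + (\<Sum>m\<le>j. a m)) * ((\<lambda>j. poly V (\<xi> j)) (Suc j) - (\<lambda>j. poly V (\<xi> j)) j))"
    by (simp add: mstar_closed a_def xi0)
  also have "\<dots> = (poly v 0 + (\<Sum>m\<le>k. a m)) * poly V 1 - poly v 0 * poly V 0 - (\<Sum>j\<le>k. a j * poly V (\<xi> j))"
    by (subst sbp) (simp add: xi0 xi1)
  also have "(\<Sum>m\<le>k. a m) = poly v 1 - poly v 0 - \<omega> (Suc k) * poly (pderiv v) 1"
  proof -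
    have "degree (pderiv v) \<le> 2*k - 1" using dv by (simp add: degree_pderiv)
    hence "Rr k \<xi> \<omega> (pderiv v) = 0" by (rule Rr_exact)
    hence "ref_quad k \<xi> \<omega> (pderiv v) = poly v 1 - poly v 0" by (simp add: Rr_def I01_ftc)
    thus ?thesis by (simp add: ref_quad_def a_def xi1)
  qed
  also have "(\<Sum>j\<le>k. a j * poly V (\<xi> j)) = ref_quad k \<xi> \<omega> (pderiv v * V) - \<omega> (Suc k) * poly (pderiv v) 1 * poly V 1"
    by (simp add: ref_quad_def a_def xi1 mult_ac)
  also have "ref_quad k \<xi> \<omega> (pderiv v * V) = I01 (pderiv v * V) - Rr k \<xi> \<omega> (pderiv v * V)"
    by (simp add: Rr_def)
  also have "I01 (pderiv v * V) = poly v 1 * poly V 1 - poly v 0 * poly V 0 - I01 (v * v)"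
    using I01_ibp[of V v] V by (simp add: mult.commute)
  finally show ?thesis by (simp add: algebra_simps)
qed

end


lemma L0: "L 0 = 1" by (simp add: ref_legendre_def)

lemma expansion: "degree v \<le> m \<Longrightarrow> \<exists>b. v = (\<Sum>n\<le>m. smult (b n) (L n))"
proof (induction m arbitrary: v)
  case 0
  hence "v = [:coeff v 0:]" by (metis degree_0_id le_0_eq)
  hence "v = smult (coeff v 0) (L 0)" by (simp add: L0)
  thus ?case by auto
next
  case (Suc m)
  define c where "c = coeff v (Suc m) / lc (Suc m)"
  define w where "w = v - smult c (L (Suc m))"
  have "degree w \<le> m"
  proof (rule degree_le, intro allI impI)
    fix i assume "m < i"
    thus "coeff w i = 0" using Suc.prems degree_L[of "Suc m"] coeff_L[of "Suc m"] lc_pos[of "Suc m"]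
      by (cases "i = Suc m") (auto simp: w_def c_def coeff_eq_0)
  qed
  then obtain b where b: "w = (\<Sum>n\<le>m. smult (b n) (L n))" using Suc.IH by blast
  have "v = (\<Sum>n\<le>Suc m. smult ((b(Suc m := c)) n) (L n))"
    by (simp add: b[unfolded w_def, symmetric] w_def)
  thus ?case by blast
qed

lemma coeff_mult_top:
  fixes p q :: "real poly"
  assumes "degree p \<le> a" "degree q \<le> b"
  shows "coeff (p * q) (a + b) = coeff p a * coeff q b"
proof -
  have "coeff (p * q) (a + b) = (\<Sum>i\<le>a+b. coeff p i * coeff q (a + b - i))" by (simp add: coeff_mult)
  also have "\<dots> = (\<Sum>i\<le>a+b. if i = a then coeff p a * coeff q b else 0)"
  proof (rule sum.cong)
    fix i assume "i \<in> {..a+b}"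
    show "coeff p i * coeff q (a + b - i) = (if i = a then coeff p a * coeff q b else 0)"
    proof (cases "i = a")
      case False
      hence "i > a \<or> a + b - i > b" by auto
      thus ?thesis using assms False by (auto simp: coeff_eq_0)
    qed simp
  qed simp
  also have "\<dots> = coeff p a * coeff q b" by simp
  finally show ?thesis .
qed

lemma I01_square_expansion:
  "I01 ((\<Sum>n\<le>m. smult (b n) (L n)) * (\<Sum>n\<le>m. smult (b n) (L n))) = (\<Sum>n\<le>m. (b n)^2 / (2 * real n + 1))"
proof -
  have "(\<Sum>n\<le>m. smult (b n) (L n)) * (\<Sum>n\<le>m. smult (b n) (L n)) = (\<Sum>n\<le>m. \<Sum>n'\<le>m. smult (b n * b n') (L n * L n'))"
    by (simp add: sum_distrib_left sum_distrib_right mult_ac)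
  hence "I01 ((\<Sum>n\<le>m. smult (b n) (L n)) * (\<Sum>n\<le>m. smult (b n) (L n))) = (\<Sum>n\<le>m. \<Sum>n'\<le>m. b n * b n' * I01 (L n * L n'))"
    by (simp add: I01_sum I01_smult)
  also have "\<dots> = (\<Sum>n\<le>m. \<Sum>n'\<le>m. if n' = n then (b n)^2 / (2 * real n + 1) else 0)"
  proof (intro sum.cong refl)
    fix n n'
    show "b n * b n' * I01 (L n * L n') = (if n' = n then (b n)^2 / (2 * real n + 1) else 0)"
    proof (cases n n' rule: linorder_cases)
      case less thus ?thesis by (simp add: L_orth')
    next
      case greater thus ?thesis using L_orth'[of n' n] by (simp add: mult.commute)
    next
      case equal thus ?thesis by (simp add: L_norm power2_eq_square)
    qed
  qed
  also have "\<dots> = (\<Sum>n\<le>m. (b n)^2 / (2 * real n + 1))" by simp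
  finally show ?thesis .
qed

lemma lc_rec: "lc (Suc n) * real (Suc n) = lc n * (2 * (2 * real n + 1))"
proof -
  have f: "fact (2 * Suc n) = (fact (2*n) :: real) * ((2*real n + 1) * (2 * real n + 2))"
    by (simp add: fact_Suc algebra_simps)
  have g: "(fact (Suc n))^2 = (real (Suc n))^2 * (fact n :: real)^2"
    by (simp add: power_mult_distrib del: of_nat_Suc)
  have "lc (Suc n) = lc n * ((2*real n + 1) * (2 * real n + 2) / (real (Suc n))^2)"
    unfolding lc_def f g by simp
  also have "(2*real n + 1) * (2 * real n + 2) / (real (Suc n))^2 = 2 * (2*real n + 1) / real (Suc n)"
  proof -
    have "(2 * real n + 2) = 2 * real (Suc n)" by simp
    moreover have "real (Suc n) \<noteq> 0" by simp
    ultimately show ?thesis by (simp only: power2_eq_square) (simp del: of_nat_Suc)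
  qed
  finally show ?thesis by (simp del: of_nat_Suc)
qed

lemma lc_identity:
  assumes "k \<ge> 1"
  shows "lc (Suc k) * lc (k - 1) * (2 * real k - 1) * (real k + 1) = (2 * real k + 1) * real k * (lc k)^2"
proof -
  obtain m where k: "k = Suc m" using assms by (cases k) auto
  have a: "lc (Suc (Suc m)) * real (Suc (Suc m)) = lc (Suc m) * (2 * (2 * real (Suc m) + 1))" by (rule lc_rec)
  have b: "lc (Suc m) * real (Suc m) = lc m * (2 * (2 * real m + 1))" by (rule lc_rec)
  have "lc (Suc (Suc m)) * lc m * (2 * real (Suc m) - 1) * (real (Suc m) + 1)
      = (lc (Suc (Suc m)) * real (Suc (Suc m))) * lc m * (2 * real m + 1)" by (simp add: algebra_simps)
  also have "\<dots> = lc (Suc m) * (2 * real (Suc m) + 1) * (lc m * (2 * (2 * real m + 1)))" unfolding a by (simp add: algebra_simps)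
  also have "\<dots> = (2 * real (Suc m) + 1) * real (Suc m) * (lc (Suc m))^2" unfolding b[symmetric] by (simp add: power2_eq_square algebra_simps)
  finally show ?thesis using k by simp
qed


context
  fixes k :: nat and \<xi> \<omega> :: "nat \<Rightarrow> real"
  assumes S: "assumption_S k \<xi> \<omega>"
begin

definition rho where "rho = Rr k \<xi> \<omega> (pderiv (L k) * antider (L k))"

lemma coeff_antider_top: "coeff (antider (L n)) (Suc n) = lc n / real (Suc n)"
proof -
  have "coeff (pderiv (antider (L n))) n = real (Suc n) * coeff (antider (L n)) (Suc n)"
    by (rule coeff_pderiv)
  hence "lc n = real (Suc n) * coeff (antider (L n)) (Suc n)" by (simp add: coeff_L)
  thus ?thesis by (simp add: field_simps del: of_nat_Suc)
qed

lemma theta_pos: "1 / (2 * real k + 1) + rho > 0"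
proof -
  have k1: "k \<ge> 1" using k_ge1[OF S] .
  define r where "r = Rr k \<xi> \<omega> (monom 1 (2*k))"
  have dp: "degree (pderiv (L k)) \<le> k - 1" by (simp add: degree_pderiv degree_L)
  have da: "degree (antider (L k)) \<le> k + 1" using degree_antider[of "L k"] by (simp add: degree_L)
  have e1: "k - 1 + (k + 1) = 2 * k" using k1 by simp
  have cp: "coeff (pderiv (L k)) (k - 1) = real k * lc k"
    using coeff_pderiv[of "L k" "k - 1"] k1 by (simp add: coeff_L)
  have "coeff (pderiv (L k) * antider (L k)) (2*k) = real k * lc k * (lc k / real (Suc k))"
    using coeff_mult_top[OF dp da, unfolded e1] cp coeff_antider_top[of k] by simp
  moreover have "degree (pderiv (L k) * antider (L k)) \<le> 2 * k"
    using degree_mult_le[of "pderiv (L k)" "antider (L k)"] dp da e1 by linarith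
  ultimately have rho: "rho = real k * (lc k)^2 / (real k + 1) * r"
    unfolding rho_def r_def using Rr_top[OF S] by (simp add: power2_eq_square mult_ac add.commute)
  have d1: "degree (L (Suc k)) \<le> Suc k" "degree (L (k - 1)) \<le> k - 1" by (simp_all add: degree_L)
  have e2: "Suc k + (k - 1) = 2 * k" using k1 by simp
  have "coeff (L (Suc k) * L (k - 1)) (2*k) = lc (Suc k) * lc (k - 1)"
    using coeff_mult_top[OF d1, unfolded e2] by (simp add: coeff_L)
  moreover have "degree (L (Suc k) * L (k - 1)) \<le> 2 * k"
    using degree_mult_le[of "L (Suc k)" "L (k - 1)"] d1 e2 by linarith
  ultimately have R2: "Rr k \<xi> \<omega> (L (Suc k) * L (k - 1)) = lc (Suc k) * lc (k - 1) * r"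
    unfolding r_def using Rr_top[OF S] by simp
  have I2: "I01 (L (Suc k) * L (k - 1)) = 0" using L_orth'[of "k - 1" "Suc k"] by (simp add: mult.commute)
  have "ref_quad k \<xi> \<omega> (L (Suc k) * L (k - 1)) = - (lc (Suc k) * lc (k - 1) * r)"
    using R2 I2 by (simp add: Rr_def)
  with S have cond: "1 / (2 * real k - 1) + lc (Suc k) * lc (k - 1) * r > 0"
    by (simp add: assumption_S_def)
  define A where "A = lc (Suc k) * lc (k - 1)"
  have pos: "2 * real k - 1 > 0" using k1 by simp
  have c2: "1 + (2 * real k - 1) * A * r > 0"
  proof -
    have "(2 * real k - 1) * (1 / (2 * real k - 1) + A * r) > 0" using cond pos A_def by simp
    thus ?thesis using pos by (simp add: algebra_simps)
  qed
  have id: "A * (2 * real k - 1) * (real k + 1) = (2 * real k + 1) * real k * (lc k)^2"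
    unfolding A_def by (rule lc_identity[OF k1])
  have "(2 * real k + 1) * (real k + 1) * (1 / (2 * real k + 1) + rho)
        = (real k + 1) + (2 * real k + 1) * real k * (lc k)^2 * r"
  proof -
    have nz: "2 * real k + 1 \<noteq> 0" "real k + 1 \<noteq> 0" by linarith+
    have "(2 * real k + 1) * (real k + 1) * (1 / (2 * real k + 1) + rho)
         = (2 * real k + 1) * (real k + 1) * (1 / (2 * real k + 1)) + (2 * real k + 1) * ((real k + 1) * rho)"
      by (metis distrib_left mult.assoc)
    also have "(2 * real k + 1) * (real k + 1) * (1 / (2 * real k + 1)) = real k + 1" using nz by simp
    also have "(real k + 1) * rho = real k * (lc k)^2 * r" unfolding rho using nz by simp
    finally show ?thesis by (simp add: mult_ac)
  qed
  also have "\<dots> = (real k + 1) * (1 + (2 * real k - 1) * A * r)" unfolding id[symmetric] by (simp add: algebra_simps)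
  also have "\<dots> > 0" using c2 by simp
  finally show ?thesis by (simp add: zero_less_mult_iff) (smt (verit) of_nat_0_le_iff mult_nonneg_nonneg)
qed

end


lemma mstar_add: "mstar_coef X A (p + q) j = mstar_coef X A p j + mstar_coef X A q j"
  by (induction j) (simp_all add: pderiv_add algebra_simps)
lemma mstar_smult: "mstar_coef X A (smult c p) j = c * mstar_coef X A p j"
  by (induction j) (simp_all add: pderiv_smult algebra_simps)
lemma mstar_zero: "mstar_coef X A 0 j = 0"
  by (induction j) simp_all
lemma mstar_sum: "mstar_coef X A (\<Sum>n\<in>N. smult (b n) (P n)) j = (\<Sum>n\<in>N. b n * mstar_coef X A (P n) j)"
  by (induction N rule: infinite_finite_induct) (simp_all add: mstar_zero mstar_add mstar_smult)

lemma poly_diff_const: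
  fixes V W :: "real poly"
  assumes "pderiv V = pderiv W"
  shows "poly V y - poly V x = poly W y - poly W x"
proof -
  have "pderiv (V - W) = 0" using assms by (simp add: pderiv_diff)
  hence "degree (V - W) = 0" by (simp add: pderiv_eq_0_iff)
  hence "V - W = [:coeff (V - W) 0:]" by (metis degree_0_id)
  hence "poly (V - W) y = poly (V - W) x" by (subst (1 2) \<open>V - W = _\<close>) simp
  thus ?thesis by simp
qed

context
  fixes k :: nat and \<xi> \<omega> :: "nat \<Rightarrow> real"
  assumes S: "assumption_S k \<xi> \<omega>"
begin

lemma Rr_cross:
  assumes "n \<le> k" "m \<le> k" "\<not> (n = k \<and> m = k)"
  shows "Rr k \<xi> \<omega> (pderiv (L n) * antider (L m)) = 0"
proof (cases "n = 0")
  case True thus ?thesis by (simp add: L0)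
next
  case False
  have "degree (pderiv (L n) * antider (L m)) \<le> (n - 1) + (m + 1)"
    using degree_mult_le[of "pderiv (L n)" "antider (L m)"] degree_antider[of "L m"]
    by (simp add: degree_pderiv degree_L)
  also have "\<dots> \<le> 2 * k - 1" using assms False by linarith
  finally show ?thesis by (rule Rr_exact[OF S])
qed

lemma qsum_expansion:
  assumes V: "pderiv V = (\<Sum>n\<le>k. smult (b n) (L n))"
  shows "(\<Sum>j\<le>k. mstar_coef \<xi> \<omega> (\<Sum>n\<le>k. smult (b n) (L n)) j * (poly V (\<xi> (Suc j)) - poly V (\<xi> j)))
       = (\<Sum>n\<le>k. (b n)^2 * (1 / (2 * real n + 1) + (if n = k then rho k \<xi> \<omega> else 0)))"
proof -
  define v where "v = (\<Sum>n\<le>k. smult (b n) (L n))"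
  define Vb where "Vb = (\<Sum>n\<le>k. smult (b n) (antider (L n)))"
  have dv: "degree v \<le> k" unfolding v_def
    by (rule degree_sum_le) (auto intro: order.trans[OF degree_smult_le] simp: degree_L)
  have Vb: "pderiv Vb = v" by (simp add: Vb_def v_def pderiv_sum' pderiv_smult)
  have "(\<Sum>j\<le>k. mstar_coef \<xi> \<omega> v j * (poly V (\<xi> (Suc j)) - poly V (\<xi> j)))
      = (\<Sum>j\<le>k. mstar_coef \<xi> \<omega> v j * (poly Vb (\<xi> (Suc j)) - poly Vb (\<xi> j)))"
    using poly_diff_const[of V Vb] V Vb v_def by simp
  also have "\<dots> = I01 (v * v) + Rr k \<xi> \<omega> (pderiv v * Vb)" by (rule qref_formula[OF S dv Vb])
  also have "I01 (v * v) = (\<Sum>n\<le>k. (b n)^2 / (2 * real n + 1))" unfolding v_def by (rule I01_square_expansion)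
  also have "Rr k \<xi> \<omega> (pderiv v * Vb) = (b k)^2 * rho k \<xi> \<omega>"
  proof -
    have "pderiv v * Vb = (\<Sum>n\<le>k. \<Sum>m\<le>k. smult (b n * b m) (pderiv (L n) * antider (L m)))"
      unfolding v_def Vb_def pderiv_sum' pderiv_smult sum_product
      by (simp only: mult_smult_left mult_smult_right smult_smult) (intro sum.cong refl, simp add: mult.commute)
    hence "Rr k \<xi> \<omega> (pderiv v * Vb) = (\<Sum>n\<le>k. \<Sum>m\<le>k. b n * b m * Rr k \<xi> \<omega> (pderiv (L n) * antider (L m)))"
      by (simp add: Rr_sum Rr_smult)
    also have "\<dots> = (\<Sum>n\<le>k. \<Sum>m\<le>k. if n = k \<and> m = k then (b k)^2 * rho k \<xi> \<omega> else 0)"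
    proof (intro sum.cong refl)
      fix n m assume "n \<in> {..k}" "m \<in> {..k}"
      thus "b n * b m * Rr k \<xi> \<omega> (pderiv (L n) * antider (L m)) = (if n = k \<and> m = k then (b k)^2 * rho k \<xi> \<omega> else 0)"
        using Rr_cross[of n m] by (auto simp: rho_def[OF S] power2_eq_square)
    qed
    also have "\<dots> = (b k)^2 * rho k \<xi> \<omega>"
    proof -
      have "\<And>n. (\<Sum>m\<le>k. if n = k \<and> m = k then (b k)^2 * rho k \<xi> \<omega> else 0) = (if n = k then (b k)^2 * rho k \<xi> \<omega> else 0)"
        by (case_tac "n = k") simp_all
      thus ?thesis by simp
    qed
    finally show ?thesis .
  qed
  also have "(\<Sum>n\<le>k. (b n)^2 / (2 * real n + 1)) + (b k)^2 * rho k \<xi> \<omega>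
      = (\<Sum>n\<le>k. (b n)^2 * (1 / (2 * real n + 1) + (if n = k then rho k \<xi> \<omega> else 0)))"
  proof -
    have "(\<Sum>n\<le>k. (b n)^2 * (1 / (2 * real n + 1) + (if n = k then rho k \<xi> \<omega> else 0)))
        = (\<Sum>n\<le>k. (b n)^2 / (2 * real n + 1) + (if n = k then (b k)^2 * rho k \<xi> \<omega> else 0))"
      by (rule sum.cong) (auto simp: distrib_left)
    also have "\<dots> = (\<Sum>n\<le>k. (b n)^2 / (2 * real n + 1)) + (b k)^2 * rho k \<xi> \<omega>"
      by (simp add: sum.distrib)
    finally show ?thesis by simp
  qed
  finally show ?thesis unfolding v_def .
qed

end


context
  fixes k :: nat and \<xi> \<omega> :: "nat \<Rightarrow> real"
  assumes S: "assumption_S k \<xi> \<omega>"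
begin

lemma ref_main:
  "\<exists>K>0. \<forall>v V. degree v \<le> k \<longrightarrow> pderiv V = v \<longrightarrow>
     (\<Sum>j\<le>k. (mstar_coef \<xi> \<omega> v j)^2 * (\<xi> (Suc j) - \<xi> j))
       \<le> K * (\<Sum>j\<le>k. mstar_coef \<xi> \<omega> v j * (poly V (\<xi> (Suc j)) - poly V (\<xi> j)))"
proof -
  define \<theta> where "\<theta> = 1 / (2 * real k + 1) + rho k \<xi> \<omega>"
  have th: "\<theta> > 0" unfolding \<theta>_def by (rule theta_pos[OF S])
  define \<mu> where "\<mu> = min (1 / (2 * real k + 1)) \<theta>"
  have mu: "\<mu> > 0" using th by (simp add: \<mu>_def)
  define K0 where "K0 = (\<Sum>j\<le>k. (\<xi> (Suc j) - \<xi> j) * (\<Sum>n\<le>k. (mstar_coef \<xi> \<omega> (L n) j)^2))"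
  have dpos: "\<And>j. j \<in> {..k} \<Longrightarrow> \<xi> (Suc j) - \<xi> j > 0" using xi_mono[OF S] by simp
  have K0: "K0 \<ge> 0" unfolding K0_def
    by (intro sum_nonneg mult_nonneg_nonneg) (auto simp: xi_mono[OF S] less_imp_le)
  define K where "K = (K0 + 1) / \<mu>"
  have Kpos: "K > 0" using K0 mu by (simp add: K_def)
  show ?thesis
  proof (intro exI[of _ K] conjI allI impI Kpos)
    fix v V :: "real poly" assume dv: "degree v \<le> k" and V: "pderiv V = v"
    obtain b where b: "v = (\<Sum>n\<le>k. smult (b n) (L n))" using expansion[OF dv] by blast
    define B where "B = (\<Sum>n\<le>k. (b n)^2)"
    define q where "q = (\<Sum>j\<le>k. mstar_coef \<xi> \<omega> v j * (poly V (\<xi> (Suc j)) - poly V (\<xi> j)))"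
    have q: "q = (\<Sum>n\<le>k. (b n)^2 * (1 / (2 * real n + 1) + (if n = k then rho k \<xi> \<omega> else 0)))"
      unfolding q_def using qsum_expansion[OF S, of V b] V b by simp
    have qB: "\<mu> * B \<le> q"
      unfolding q B_def sum_distrib_left
    proof (rule sum_mono)
      fix n assume n: "n \<in> {..k}"
      have "\<mu> \<le> 1 / (2 * real n + 1) + (if n = k then rho k \<xi> \<omega> else 0)"
      proof (cases "n = k")
        case True thus ?thesis by (simp add: \<mu>_def \<theta>_def)
      next
        case False
        have "1 / (2 * real k + 1) \<le> 1 / (2 * real n + 1)" using n by (simp add: frac_le)
        thus ?thesis using False by (simp add: \<mu>_def)
      qed
      hence "\<mu> * (b n)^2 \<le> (1 / (2 * real n + 1) + (if n = k then rho k \<xi> \<omega> else 0)) * (b n)^2"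
        by (rule mult_right_mono) simp
      thus "\<mu> * (b n)^2 \<le> (b n)^2 * (1 / (2 * real n + 1) + (if n = k then rho k \<xi> \<omega> else 0))"
        by (simp only: mult.commute)
    qed
    have B0: "B \<ge> 0" unfolding B_def by (simp add: sum_nonneg)
    have cs: "(mstar_coef \<xi> \<omega> v j)^2 \<le> B * (\<Sum>n\<le>k. (mstar_coef \<xi> \<omega> (L n) j)^2)" for j
    proof -
      have "mstar_coef \<xi> \<omega> v j = (\<Sum>n\<le>k. b n * mstar_coef \<xi> \<omega> (L n) j)"
        unfolding b by (rule mstar_sum)
      thus ?thesis unfolding B_def by (simp add: Cauchy_Schwarz_ineq_sum)
    qed
    have "(\<Sum>j\<le>k. (mstar_coef \<xi> \<omega> v j)^2 * (\<xi> (Suc j) - \<xi> j))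
        \<le> (\<Sum>j\<le>k. B * (\<Sum>n\<le>k. (mstar_coef \<xi> \<omega> (L n) j)^2) * (\<xi> (Suc j) - \<xi> j))"
      by (rule sum_mono) (rule mult_right_mono[OF cs], auto simp: xi_mono[OF S] less_imp_le)
    also have "\<dots> = B * K0" unfolding K0_def sum_distrib_left by (rule sum.cong) (simp_all add: mult_ac sum_distrib_left)
    also have "\<dots> \<le> (q / \<mu>) * K0" using qB mu K0 by (intro mult_right_mono) (simp_all add: field_simps)
    also have "\<dots> \<le> K * q"
    proof -
      have "q \<ge> 0" using qB mu B0 by (smt (verit) mult_nonneg_nonneg)
      hence "q / \<mu> \<ge> 0" using mu by simp
      hence "(q / \<mu>) * K0 \<le> (q / \<mu>) * (K0 + 1)" by (rule mult_left_mono[rotated]) simp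
      thus ?thesis by (simp add: K_def mult.commute)
    qed
    finally show "(\<Sum>j\<le>k. (mstar_coef \<xi> \<omega> v j)^2 * (\<xi> (Suc j) - \<xi> j)) \<le> K * q" .
  qed
qed

end


lemma lbint_sq_nonneg: "0 \<le> (LBINT x:A. (g x)^2 :: real)"
  unfolding set_lebesgue_integral_def by (rule Bochner_Integration.integral_nonneg) (auto simp: indicator_def)

lemma amgm_bound:
  fixes a b c \<epsilon> :: real
  assumes ab: "a \<le> b" and e: "\<epsilon> > 0"
    and int2: "set_integrable lborel {a..b} (\<lambda>x. (g x)^2)"
  shows "c * (LBINT x:{a..b}. g x) \<le> \<epsilon> / 2 * c^2 * (b - a) + 1 / (2 * \<epsilon>) * (LBINT x:{a..b}. (g x)^2)"
proof (cases "set_integrable lborel {a..b} g")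
  case False
  hence "(LBINT x:{a..b}. g x) = 0"
    unfolding set_lebesgue_integral_def set_integrable_def by (rule not_integrable_integral_eq)
  moreover have "0 \<le> \<epsilon> / 2 * c^2 * (b - a)" using ab e by simp
  moreover have "0 \<le> 1 / (2 * \<epsilon>) * (LBINT x:{a..b}. (g x)^2)" using e lbint_sq_nonneg[of "{a..b}" g] by simp
  ultimately show ?thesis by simp
next
  case True
  have ci: "set_integrable lborel {a..b} (\<lambda>x. \<epsilon> / 2 * c^2)"
    by (rule borel_integrable_atLeastAtMost') simp
  have gi: "set_integrable lborel {a..b} (\<lambda>x. 1 / (2 * \<epsilon>) * (g x)^2)" using int2 by simp
  have "c * (LBINT x:{a..b}. g x) = (LBINT x:{a..b}. c * g x)" by simp
  also have "\<dots> \<le> (LBINT x:{a..b}. \<epsilon> / 2 * c^2 + 1 / (2 * \<epsilon>) * (g x)^2)"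
  proof (rule set_integral_mono)
    show "set_integrable lborel {a..b} (\<lambda>x. c * g x)" using True by simp
    show "set_integrable lborel {a..b} (\<lambda>x. \<epsilon> / 2 * c^2 + 1 / (2 * \<epsilon>) * (g x)^2)"
      using ci gi by simp
    fix x
    have "0 \<le> (\<epsilon> * c - g x)^2 / (2 * \<epsilon>)" using e by simp
    also have "(\<epsilon> * c - g x)^2 / (2 * \<epsilon>) = \<epsilon> / 2 * c^2 + 1 / (2 * \<epsilon>) * (g x)^2 - c * g x"
      using e by (simp add: power2_eq_square field_simps)
    finally show "c * g x \<le> \<epsilon> / 2 * c^2 + 1 / (2 * \<epsilon>) * (g x)^2" by simp
  qed
  also have "\<dots> = (LBINT x:{a..b}. \<epsilon> / 2 * c^2) + (LBINT x:{a..b}. 1 / (2 * \<epsilon>) * (g x)^2)"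
    using ci gi by simp
  also have "(LBINT x:{a..b}. \<epsilon> / 2 * c^2) = \<epsilon> / 2 * c^2 * (b - a)"
    using ab by (subst set_integral_const) (simp_all add: emeasure_lborel_Icc_eq)
  finally show ?thesis by simp
qed

lemma abs_amgm_bound:
  fixes a b c \<epsilon> :: real
  assumes "a \<le> b" "\<epsilon> > 0" "set_integrable lborel {a..b} (\<lambda>x. (g x)^2)"
  shows "\<bar>c * (LBINT x:{a..b}. g x)\<bar> \<le> \<epsilon> / 2 * c^2 * (b - a) + 1 / (2 * \<epsilon>) * (LBINT x:{a..b}. (g x)^2)"
  using amgm_bound[OF assms, of c] amgm_bound[OF assms, of "-c"] by (simp add: abs_le_iff)

lemma lbint_split:
  fixes f :: "real \<Rightarrow> real"
  assumes "a \<le> b" "b \<le> c" "set_integrable lborel {a..c} f"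
  shows "(LBINT x:{a..b}. f x) + (LBINT x:{b..c}. f x) = (LBINT x:{a..c}. f x)"
proof -
  have i: "interval_lebesgue_integrable lborel (ereal a) (ereal c) f"
    unfolding interval_lebesgue_integrable_def using assms
    by (auto intro: set_integrable_subset[OF assms(3)] simp: einterval_def)
  have "(LBINT x=ereal a..ereal b. f x) + (LBINT x=ereal b..ereal c. f x) = (LBINT x=ereal a..ereal c. f x)"
    by (rule interval_integral_sum) (use i assms in \<open>simp add: min_def max_def\<close>)
  thus ?thesis using assms by (simp add: interval_integral_Icc)
qed

lemma chain_mono: "(\<And>j. j < n \<Longrightarrow> y j \<le> y (Suc j)) \<Longrightarrow> i \<le> m \<Longrightarrow> m \<le> n \<Longrightarrow> y i \<le> (y m :: real)"
proof (induction m)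
  case (Suc m)
  thus ?case by (cases "i = Suc m") (auto intro: order.trans[of _ "y m"])
qed simp

lemma lbint_telescope:
  fixes f :: "real \<Rightarrow> real" and y :: "nat \<Rightarrow> real"
  assumes "\<And>j. j < n \<Longrightarrow> y j \<le> y (Suc j)" "set_integrable lborel {y 0..y n} f"
  shows "(\<Sum>j<n. LBINT x:{y j..y (Suc j)}. f x) = (LBINT x:{y 0..y n}. f x)"
  using assms
proof (induction n)
  case 0 thus ?case using interval_integral_Icc[of "y 0" "y 0" f] by simp
next
  case (Suc n)
  have m: "y 0 \<le> y n" using chain_mono[of "Suc n" y 0 n] Suc.prems by simp
  have s: "y n \<le> y (Suc n)" using Suc.prems by simp
  have "set_integrable lborel {y 0..y n} f"
    by (rule set_integrable_subset[OF Suc.prems(2)]) (use s in auto)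
  hence "(\<Sum>j<n. LBINT x:{y j..y (Suc j)}. f x) = (LBINT x:{y 0..y n}. f x)"
    using Suc by simp
  thus ?case using lbint_split[OF m s Suc.prems(2)] by simp
qed


lemma mstar_affine:
  "mstar_coef (\<lambda>j. a + h * \<xi> j) (\<lambda>j. h * \<omega> j) p j = mstar_coef \<xi> \<omega> (pcompose p [:a, h:]) j"
  by (induction j) (simp_all add: poly_pcompose pderiv_pcompose pderiv_pCons algebra_simps)

lemma cell_bound:
  fixes k :: nat and \<xi> \<omega> :: "nat \<Rightarrow> real" and K :: real
  assumes S: "assumption_S k \<xi> \<omega>"
    and Kp: "\<forall>v V. degree v \<le> k \<longrightarrow> pderiv V = v \<longrightarrow>
     (\<Sum>j\<le>k. (mstar_coef \<xi> \<omega> v j)^2 * (\<xi> (Suc j) - \<xi> j))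
       \<le> K * (\<Sum>j\<le>k. mstar_coef \<xi> \<omega> v j * (poly V (\<xi> (Suc j)) - poly V (\<xi> j)))"
    and hpos: "h > 0" and dp: "degree p \<le> k"
  shows "(\<Sum>j\<le>k. (mstar_coef (\<lambda>j. a + h * \<xi> j) (\<lambda>j. h * \<omega> j) p j)^2 * ((a + h * \<xi> (Suc j)) - (a + h * \<xi> j)))
    \<le> K * (\<Sum>j\<le>k. mstar_coef (\<lambda>j. a + h * \<xi> j) (\<lambda>j. h * \<omega> j) p j * (LBINT x:{a + h * \<xi> j..a + h * \<xi> (Suc j)}. poly p x))"
proof -
  define v where "v = pcompose p [:a, h:]"
  define VV where "VV = smult (1 / h) (pcompose (antider p) [:a, h:])"
  have dv: "degree v \<le> k" unfolding v_def using dp by (simp add: degree_pcompose)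
  have VV: "pderiv VV = v"
    unfolding VV_def v_def using hpos by (simp add: pderiv_smult pderiv_pcompose pderiv_pCons)
  have lb: "(LBINT x:{a + h * \<xi> j..a + h * \<xi> (Suc j)}. poly p x) = h * (poly VV (\<xi> (Suc j)) - poly VV (\<xi> j))"
    if "j \<le> k" for j
  proof -
    have "a + h * \<xi> j \<le> a + h * \<xi> (Suc j)" using xi_mono[OF S that] hpos by simp
    from lbint_poly[OF this, of "antider p"]
    show ?thesis unfolding VV_def using hpos by (simp add: poly_pcompose algebra_simps)
  qed
  have "(\<Sum>j\<le>k. (mstar_coef (\<lambda>j. a + h * \<xi> j) (\<lambda>j. h * \<omega> j) p j)^2 * ((a + h * \<xi> (Suc j)) - (a + h * \<xi> j)))
      = h * (\<Sum>j\<le>k. (mstar_coef \<xi> \<omega> v j)^2 * (\<xi> (Suc j) - \<xi> j))"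
    unfolding mstar_affine v_def sum_distrib_left by (rule sum.cong) (simp_all add: algebra_simps)
  also have "\<dots> \<le> h * (K * (\<Sum>j\<le>k. mstar_coef \<xi> \<omega> v j * (poly VV (\<xi> (Suc j)) - poly VV (\<xi> j))))"
    using Kp dv VV hpos by (intro mult_left_mono) auto
  also have "\<dots> = K * (\<Sum>j\<le>k. mstar_coef (\<lambda>j. a + h * \<xi> j) (\<lambda>j. h * \<omega> j) p j * (LBINT x:{a + h * \<xi> j..a + h * \<xi> (Suc j)}. poly p x))"
    unfolding mstar_affine v_def[symmetric] sum_distrib_left by (rule sum.cong) (simp_all add: lb mult_ac)
  finally show ?thesis .
qed


lemma node_eta: "node xs \<xi> i = (\<lambda>j. xs i + cell_size xs i * \<xi> j)" by (rule ext) (simp add: node_def)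
lemma weight_eta: "weight xs \<omega> i = (\<lambda>j. cell_size xs i * \<omega> j)" by (rule ext) (simp add: weight_def)

theorem proposition4p14:
  fixes k s :: nat and d :: "nat \<Rightarrow> nat \<Rightarrow> real" and \<xi> \<omega> :: "nat \<Rightarrow> real" and Cq :: real
  assumes "assumption_S k \<xi> \<omega>"
  shows "\<exists>C>0. \<forall>(N::nat) (xs::nat \<Rightarrow> real) (g::nat \<Rightarrow> nat \<Rightarrow> real \<Rightarrow> real)
            (G::nat \<Rightarrow> real poly) (n::nat) (l::nat).
     mesh N xs \<longrightarrow> quasi_uniform Cq N xs \<longrightarrow> l < s \<longrightarrow>
     (\<forall>\<kappa>\<le>l. L2_on {xs 0..xs N} (g n \<kappa>)) \<longrightarrow>
     Vk k N G \<longrightarrow>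
     (\<forall>W. Vk k N W \<longrightarrow>
        star_ip k N xs \<xi> \<omega> G W =
          (\<Sum>\<kappa>\<le>l. d l \<kappa> * pair_Mstar k N xs \<xi> \<omega> (\<lambda>i. g n \<kappa>) W)) \<longrightarrow>
     star_ip k N xs \<xi> \<omega> G G \<le> C * (\<Sum>\<kappa>\<le>l. L2_norm_sq {xs 0..xs N} (g n \<kappa>))"
proof -
  note S = assms
  obtain K where Kpos: "K > 0" and Kp: "\<forall>v V. degree v \<le> k \<longrightarrow> pderiv V = v \<longrightarrow>
     (\<Sum>j\<le>k. (mstar_coef \<xi> \<omega> v j)^2 * (\<xi> (Suc j) - \<xi> j))
       \<le> K * (\<Sum>j\<le>k. mstar_coef \<xi> \<omega> v j * (poly V (\<xi> (Suc j)) - poly V (\<xi> j)))"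
    using ref_main[OF S] by blast
  define Dall where "Dall = 1 + (\<Sum>l<s. \<Sum>\<kappa>\<le>l. \<bar>d l \<kappa>\<bar>)"
  have Dpos: "Dall \<ge> 1" unfolding Dall_def by (simp add: sum_nonneg)
  have xi_ch: "\<xi> j \<le> \<xi> m" if "j \<le> m" "m \<le> Suc k" for j m
  proof -
    have "\<And>j. j < Suc k \<Longrightarrow> \<xi> j \<le> \<xi> (Suc j)" using xi_mono[OF S] by (simp add: less_imp_le)
    thus ?thesis using chain_mono[of "Suc k" \<xi> j m] that by blast
  qed
  have xi01: "0 \<le> \<xi> j" "\<xi> j \<le> 1" if "j \<le> Suc k" for j
    using xi_ch[of 0 j] xi_ch[of j "Suc k"] that xi0[OF S] xi1[OF S] by auto
  show ?thesis
  proof (intro exI[of _ "Dall^2 * K"] conjI allI impI)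
    show "Dall^2 * K > 0" using Dpos Kpos by simp
    fix N xs g G n l
    assume mesh: "mesh N xs" and qu: "quasi_uniform Cq N xs" and ls: "l < s"
      and L2: "\<forall>\<kappa>\<le>l. L2_on {xs 0..xs N} (g n \<kappa>)" and VG: "Vk k N G"
      and hyp: "\<forall>W. Vk k N W \<longrightarrow> star_ip k N xs \<xi> \<omega> G W =
          (\<Sum>\<kappa>\<le>l. d l \<kappa> * pair_Mstar k N xs \<xi> \<omega> (\<lambda>i. g n \<kappa>) W)"
    define c where "c i j = mstar_coef (node xs \<xi> i) (weight xs \<omega> i) (G i) j" for i j
    define X where "X = star_ip k N xs \<xi> \<omega> G G"
    define \<Phi> where "\<Phi> = (\<Sum>i<N. \<Sum>j\<le>k. (c i j)^2 * (node xs \<xi> i (Suc j) - node xs \<xi> i j))"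
    define Sg where "Sg \<kappa> = L2_norm_sq {xs 0..xs N} (g n \<kappa>)" for \<kappa>
    have xsm: "\<And>j. j < N \<Longrightarrow> xs j \<le> xs (Suc j)" using mesh by (auto simp: mesh_def less_imp_le)
    have hpos: "\<And>i. i < N \<Longrightarrow> cell_size xs i > 0" using mesh by (simp add: mesh_def cell_size_def)
    have node_mono: "node xs \<xi> i j \<le> node xs \<xi> i (Suc j)" if "i < N" "j \<le> k" for i j
      using xi_mono[OF S that(2)] hpos[OF that(1)] by (simp add: node_def)
    have node_range: "xs 0 \<le> node xs \<xi> i j \<and> node xs \<xi> i j \<le> xs N" if "i < N" "j \<le> Suc k" for i j
    proof -
      have "xs 0 \<le> xs i" using chain_mono[of N xs 0 i] xsm that by simp
      moreover have "xs (Suc i) \<le> xs N" using chain_mono[of N xs "Suc i" N] xsm that by simp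
      moreover have "0 \<le> cell_size xs i * \<xi> j" using hpos[OF that(1)] xi01[OF that(2)] by simp
      moreover have "cell_size xs i * \<xi> j \<le> cell_size xs i"
        using hpos[OF that(1)] xi01[OF that(2)] by (simp add: mult_left_le)
      ultimately show ?thesis by (simp add: node_def cell_size_def)
    qed
    have Phi_le: "\<Phi> \<le> K * X"
    proof -
      have "\<Phi> \<le> (\<Sum>i<N. K * (\<Sum>j\<le>k. c i j * (LBINT x:{node xs \<xi> i j..node xs \<xi> i (Suc j)}. poly (G i) x)))"
        unfolding \<Phi>_def
      proof (rule sum_mono)
        fix i assume i: "i \<in> {..<N}"
        have dg: "degree (G i) \<le> k" using VG i by (simp add: Vk_def)
        show "(\<Sum>j\<le>k. (c i j)^2 * (node xs \<xi> i (Suc j) - node xs \<xi> i j))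
            \<le> K * (\<Sum>j\<le>k. c i j * (LBINT x:{node xs \<xi> i j..node xs \<xi> i (Suc j)}. poly (G i) x))"
          unfolding c_def node_eta weight_eta
          by (rule cell_bound[OF S Kp]) (use hpos i dg in auto)
      qed
      also have "\<dots> = K * X" unfolding X_def star_ip_def pair_Mstar_def c_def by (simp add: sum_distrib_left)
      finally show ?thesis .
    qed
    have Phi0: "\<Phi> \<ge> 0" unfolding \<Phi>_def
      by (intro sum_nonneg mult_nonneg_nonneg) (auto simp: node_mono)
    have Pbound: "\<bar>pair_Mstar k N xs \<xi> \<omega> (\<lambda>i. g n \<kappa>) G\<bar> \<le> \<epsilon> / 2 * \<Phi> + 1 / (2 * \<epsilon>) * Sg \<kappa>"
      if "\<kappa> \<le> l" "\<epsilon> > 0" for \<kappa> \<epsilon>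
    proof -
      have L2k: "set_integrable lborel {xs 0..xs N} (\<lambda>x. (g n \<kappa> x)^2)"
        using L2 that by (simp add: L2_on_def)
      have subint: "set_integrable lborel {a..b} (\<lambda>x. (g n \<kappa> x)^2)" if "xs 0 \<le> a" "b \<le> xs N" for a b
        by (rule set_integrable_subset[OF L2k]) (use that in auto)
      have "\<bar>pair_Mstar k N xs \<xi> \<omega> (\<lambda>i. g n \<kappa>) G\<bar>
          \<le> (\<Sum>i<N. \<Sum>j\<le>k. \<bar>c i j * (LBINT x:{node xs \<xi> i j..node xs \<xi> i (Suc j)}. g n \<kappa> x)\<bar>)"
        unfolding pair_Mstar_def c_def by (rule order.trans[OF sum_abs sum_mono]) (rule sum_abs)
      also have "\<dots> \<le> (\<Sum>i<N. \<Sum>j\<le>k. \<epsilon> / 2 * (c i j)^2 * (node xs \<xi> i (Suc j) - node xs \<xi> i j)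
             + 1 / (2 * \<epsilon>) * (LBINT x:{node xs \<xi> i j..node xs \<xi> i (Suc j)}. (g n \<kappa> x)^2))"
      proof (intro sum_mono)
        fix i j assume i: "i \<in> {..<N}" and j: "j \<in> {..k}"
        show "\<bar>c i j * (LBINT x:{node xs \<xi> i j..node xs \<xi> i (Suc j)}. g n \<kappa> x)\<bar>
           \<le> \<epsilon> / 2 * (c i j)^2 * (node xs \<xi> i (Suc j) - node xs \<xi> i j)
             + 1 / (2 * \<epsilon>) * (LBINT x:{node xs \<xi> i j..node xs \<xi> i (Suc j)}. (g n \<kappa> x)^2)"
          using i j node_range[of i j] node_range[of i "Suc j"]
          by (intro abs_amgm_bound node_mono subint that) auto
      qed
      also have "\<dots> = \<epsilon> / 2 * \<Phi> + 1 / (2 * \<epsilon>) * (\<Sum>i<N. \<Sum>j\<le>k. LBINT x:{node xs \<xi> i j..node xs \<xi> i (Suc j)}. (g n \<kappa> x)^2)"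
        unfolding \<Phi>_def by (simp add: sum.distrib sum_distrib_left mult_ac)
      also have "(\<Sum>i<N. \<Sum>j\<le>k. LBINT x:{node xs \<xi> i j..node xs \<xi> i (Suc j)}. (g n \<kappa> x)^2) = Sg \<kappa>"
      proof -
        have "(\<Sum>i<N. \<Sum>j\<le>k. LBINT x:{node xs \<xi> i j..node xs \<xi> i (Suc j)}. (g n \<kappa> x)^2)
            = (\<Sum>i<N. LBINT x:{xs i..xs (Suc i)}. (g n \<kappa> x)^2)"
        proof (rule sum.cong[OF refl])
          fix i assume i: "i \<in> {..<N}"
          have "(\<Sum>j<Suc k. LBINT x:{node xs \<xi> i j..node xs \<xi> i (Suc j)}. (g n \<kappa> x)^2)
              = (LBINT x:{node xs \<xi> i 0..node xs \<xi> i (Suc k)}. (g n \<kappa> x)^2)"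
            using i node_range[of i 0] node_range[of i "Suc k"]
            by (intro lbint_telescope node_mono subint) auto
          moreover have "node xs \<xi> i 0 = xs i" "node xs \<xi> i (Suc k) = xs (Suc i)"
            by (simp_all add: node_def xi0[OF S] xi1[OF S] cell_size_def)
          ultimately show "(\<Sum>j\<le>k. LBINT x:{node xs \<xi> i j..node xs \<xi> i (Suc j)}. (g n \<kappa> x)^2)
              = (LBINT x:{xs i..xs (Suc i)}. (g n \<kappa> x)^2)"
            by (simp add: lessThan_Suc_atMost)
        qed
        also have "\<dots> = Sg \<kappa>" unfolding Sg_def L2_norm_sq_def
          by (rule lbint_telescope[OF xsm L2k])
        finally show ?thesis .
      qed
      finally show ?thesis .
    qed
    define \<epsilon> where "\<epsilon> = 1 / (Dall * K)"
    have epos: "\<epsilon> > 0" using Dpos Kpos by (simp add: \<epsilon>_def)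
    have dsum: "(\<Sum>\<kappa>\<le>l. \<bar>d l \<kappa>\<bar>) \<le> Dall"
    proof -
      have "(\<Sum>\<kappa>\<le>l. \<bar>d l \<kappa>\<bar>) \<le> (\<Sum>l<s. \<Sum>\<kappa>\<le>l. \<bar>d l \<kappa>\<bar>)"
        using ls by (intro member_le_sum) (auto simp: sum_nonneg)
      thus ?thesis by (simp add: Dall_def)
    qed
    have dle: "\<bar>d l \<kappa>\<bar> \<le> Dall" if "\<kappa> \<le> l" for \<kappa>
      using dsum member_le_sum[of \<kappa> "{..l}" "\<lambda>\<kappa>. \<bar>d l \<kappa>\<bar>"] that by auto
    have Sg0: "Sg \<kappa> \<ge> 0" for \<kappa> unfolding Sg_def L2_norm_sq_def by (rule lbint_sq_nonneg)
    have "X = (\<Sum>\<kappa>\<le>l. d l \<kappa> * pair_Mstar k N xs \<xi> \<omega> (\<lambda>i. g n \<kappa>) G)" using hyp VG by (simp add: X_def)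
    also have "\<dots> \<le> (\<Sum>\<kappa>\<le>l. \<bar>d l \<kappa>\<bar> * (\<epsilon> / 2 * \<Phi> + 1 / (2 * \<epsilon>) * Sg \<kappa>))"
    proof (rule sum_mono)
      fix \<kappa> assume "\<kappa> \<in> {..l}"
      hence kl: "\<kappa> \<le> l" by simp
      define P where "P = pair_Mstar k N xs \<xi> \<omega> (\<lambda>i. g n \<kappa>) G"
      have "\<bar>d l \<kappa>\<bar> * \<bar>P\<bar> \<le> \<bar>d l \<kappa>\<bar> * (\<epsilon> / 2 * \<Phi> + 1 / (2 * \<epsilon>) * Sg \<kappa>)"
        unfolding P_def by (rule mult_left_mono[OF Pbound[OF kl epos]]) simp
      moreover have "d l \<kappa> * P \<le> \<bar>d l \<kappa>\<bar> * \<bar>P\<bar>"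
        by (simp only: abs_mult[symmetric] abs_ge_self)
      ultimately show "d l \<kappa> * pair_Mstar k N xs \<xi> \<omega> (\<lambda>i. g n \<kappa>) G \<le> \<bar>d l \<kappa>\<bar> * (\<epsilon> / 2 * \<Phi> + 1 / (2 * \<epsilon>) * Sg \<kappa>)"
        unfolding P_def by linarith
    qed
    also have "\<dots> = (\<Sum>\<kappa>\<le>l. \<bar>d l \<kappa>\<bar>) * (\<epsilon> / 2 * \<Phi>) + 1 / (2 * \<epsilon>) * (\<Sum>\<kappa>\<le>l. \<bar>d l \<kappa>\<bar> * Sg \<kappa>)"
    proof -
      have "(\<Sum>\<kappa>\<le>l. \<bar>d l \<kappa>\<bar> * (\<epsilon> / 2 * \<Phi> + 1 / (2 * \<epsilon>) * Sg \<kappa>))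
          = (\<Sum>\<kappa>\<le>l. \<bar>d l \<kappa>\<bar> * (\<epsilon> / 2 * \<Phi>) + 1 / (2 * \<epsilon>) * (\<bar>d l \<kappa>\<bar> * Sg \<kappa>))"
        by (rule sum.cong) (simp_all add: algebra_simps)
      also have "\<dots> = (\<Sum>\<kappa>\<le>l. \<bar>d l \<kappa>\<bar> * (\<epsilon> / 2 * \<Phi>)) + (\<Sum>\<kappa>\<le>l. 1 / (2 * \<epsilon>) * (\<bar>d l \<kappa>\<bar> * Sg \<kappa>))"
        by (rule sum.distrib)
      also have "\<dots> = (\<Sum>\<kappa>\<le>l. \<bar>d l \<kappa>\<bar>) * (\<epsilon> / 2 * \<Phi>) + 1 / (2 * \<epsilon>) * (\<Sum>\<kappa>\<le>l. \<bar>d l \<kappa>\<bar> * Sg \<kappa>)"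
        by (simp only: sum_distrib_left sum_distrib_right)
      finally show ?thesis .
    qed
    also have "\<dots> \<le> Dall * (\<epsilon> / 2 * \<Phi>) + 1 / (2 * \<epsilon>) * (Dall * (\<Sum>\<kappa>\<le>l. Sg \<kappa>))"
    proof (intro add_mono mult_right_mono mult_left_mono dsum)
      show "0 \<le> \<epsilon> / 2 * \<Phi>" using epos Phi0 by simp
      show "0 \<le> 1 / (2 * \<epsilon>)" using epos by simp
      show "(\<Sum>\<kappa>\<le>l. \<bar>d l \<kappa>\<bar> * Sg \<kappa>) \<le> Dall * (\<Sum>\<kappa>\<le>l. Sg \<kappa>)"
        unfolding sum_distrib_left by (rule sum_mono) (rule mult_right_mono[OF dle Sg0], simp)
    qed
    finally have X1: "X \<le> Dall * (\<epsilon> / 2 * \<Phi>) + 1 / (2 * \<epsilon>) * (Dall * (\<Sum>\<kappa>\<le>l. Sg \<kappa>))" .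
    have DKe: "Dall * K * \<epsilon> = 1" using Dpos Kpos by (simp add: \<epsilon>_def)
    have "Dall * (\<epsilon> / 2 * \<Phi>) \<le> Dall * (\<epsilon> / 2 * (K * X))"
      using Phi_le Dpos epos by (intro mult_left_mono) auto
    also have "Dall * (\<epsilon> / 2 * (K * X)) = (Dall * K * \<epsilon>) * X / 2" by (simp add: mult_ac)
    finally have T1: "Dall * (\<epsilon> / 2 * \<Phi>) \<le> X / 2" unfolding DKe by simp
    have ie: "1 / (2 * \<epsilon>) = Dall * K / 2" using Dpos Kpos by (simp add: \<epsilon>_def)
    have T2: "1 / (2 * \<epsilon>) * (Dall * (\<Sum>\<kappa>\<le>l. Sg \<kappa>)) = Dall^2 * K / 2 * (\<Sum>\<kappa>\<le>l. Sg \<kappa>)"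
      unfolding ie by (simp add: power2_eq_square mult_ac)
    have "X \<le> X / 2 + Dall^2 * K / 2 * (\<Sum>\<kappa>\<le>l. Sg \<kappa>)" using X1 T1 T2 by linarith
    thus "star_ip k N xs \<xi> \<omega> G G \<le> Dall^2 * K * (\<Sum>\<kappa>\<le>l. L2_norm_sq {xs 0..xs N} (g n \<kappa>))"
      unfolding X_def Sg_def by simp
  qed
qed


end
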